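(* Let $X,Y\in\mathbb{R}^{n\times n}$ and define $L:\mathbb{R}^{n\times n}\to\mathbb{R}^{n\times n}$ by $L(A)=XAY$. Then $L$ maps the set of minimally semipositive $n\times n$ matrices onto itself (i.e. $L(S)=S$ where $S$ is this set) if and only if either both $X$ and $Y$ are monomial, or both $-X$ and $-Y$ are monomial.
   Context: For a matrix or vector, $\geq 0$ means entrywise nonnegative and $>0$ entrywise positive. A matrix $A\in\mathbb{R}^{m\times n}$ is semipositive if there exists $x\in\mathbb{R}^n$ with $x\geq 0$ and $Ax>0$. $A$ is minimally semipositive if it is semipositive and no submatrix obtained from $A$ by deleting one or more columns is semipositive. A square matrix $A$ is monomial if $A\geq 0$ and every row and every column of $A$ contains exactly one nonzero entry. *)

theory Defs
  imports "HOL-Analysis.Analysis"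
begin

text \<open>Matrices are elements of real^'n^'m (rows indexed by 'm, columns by 'n);
  entry (i,j) is A $ i $ j.\<close>

definition semipositive :: "real^'n^'m \<Rightarrow> bool" where
  "semipositive A \<longleftrightarrow> (\<exists>x. (\<forall>j. x $ j \<ge> 0) \<and> (\<forall>i. (A *v x) $ i > 0))"

text \<open>The submatrix of A keeping exactly the columns in J is semipositive.
  (A nonnegative x supported on J, applied to A, equals the submatrix applied to the
  restriction of x.)\<close>
definition semipositive_on_cols :: "real^'n^'m \<Rightarrow> 'n set \<Rightarrow> bool" where
  "semipositive_on_cols A J \<longleftrightarrow>
     (\<exists>x. (\<forall>j. x $ j \<ge> 0) \<and> (\<forall>j. j \<notin> J \<longrightarrow> x $ j = 0) \<and> (\<forall>i. (A *v x) $ i > 0))"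

definition minimally_semipositive :: "real^'n^'m \<Rightarrow> bool" where
  "minimally_semipositive A \<longleftrightarrow>
     semipositive A \<and> (\<forall>J. J \<subset> UNIV \<longrightarrow> \<not> semipositive_on_cols A J)"

definition monomial_matrix :: "real^'n^'n \<Rightarrow> bool" where
  "monomial_matrix A \<longleftrightarrow>
     (\<forall>i j. A $ i $ j \<ge> 0) \<and>
     (\<forall>i. \<exists>!j. A $ i $ j \<noteq> 0) \<and>
     (\<forall>j. \<exists>!i. A $ i $ j \<noteq> 0)"

end

theory Submission
  imports Defs
begin

definition monm :: "real^'n^'n \<Rightarrow> bool" where
  "monm M \<longleftrightarrow> (\<forall>v. (\<forall>i. (M *v v) $ i \<ge> 0) \<longrightarrow> (\<forall>j. v $ j \<ge> 0))"

lemma nonneg_mv: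
  fixes M :: "real^'n^'m"
  assumes "\<forall>i j. M$i$j \<ge> 0" "\<forall>j. v$j \<ge> 0"
  shows "(M *v v)$i \<ge> 0"
  using assms by (auto simp: matrix_vector_mult_def intro!: sum_nonneg)

lemma monm_inv:
  fixes M :: "real^'n^'n"
  assumes "monm M"
  shows "\<exists>R. M ** R = mat 1 \<and> R ** M = mat 1"
proof -
  have "\<forall>x. M *v x = 0 \<longrightarrow> x = 0"
  proof (intro allI impI)
    fix x assume h: "M *v x = 0"
    have a: "\<forall>j. x$j \<ge> 0" using assms h unfolding monm_def by simp
    have "M *v (0 - x) = 0" using h by (simp only: matrix_vector_mult_diff_distrib, simp)
    hence b: "\<forall>j. (0 - x)$j \<ge> 0" using assms unfolding monm_def by (metis order_refl zero_index)
    show "x = 0" using a b by (simp add: vec_eq_iff) (meson antisym neg_0_le_iff_le)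
  qed
  then obtain R where "R ** M = mat 1" using matrix_left_invertible_ker by blast
  thus ?thesis using matrix_left_right_inverse by blast
qed

lemma monm_rinv_nonneg:
  fixes M R :: "real^'n^'n"
  assumes "monm M" "M ** R = mat 1"
  shows "R$i$j \<ge> 0"
proof -
  have "M *v (R *v axis j 1) = axis j 1"
    by (simp add: matrix_vector_mul_assoc assms(2))
  hence "\<forall>k. (R *v axis j 1)$k \<ge> 0" using assms(1) unfolding monm_def
    by (simp add: axis_def)
  thus ?thesis by (simp add: matrix_vector_mult_basis column_def)
qed

lemma monm_from_nonneg_inv:
  fixes N R :: "real^'n^'n"
  assumes "\<forall>i j. N$i$j \<ge> 0" "N ** R = mat 1"
  shows "monm R"
  unfolding monm_def
proof (intro allI impI)
  fix v j assume "\<forall>i. 0 \<le> (R *v v) $ i"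
  hence "(N *v (R *v v))$j \<ge> 0" using nonneg_mv assms(1) by blast
  thus "v$j \<ge> 0" by (simp add: matrix_vector_mul_assoc assms(2))
qed

lemma monm_mult:
  fixes M N :: "real^'n^'n"
  assumes "monm M" "monm N"
  shows "monm (M ** N)"
  using assms unfolding monm_def by (metis matrix_vector_mul_assoc)

lemma monm_one: "monm (mat 1)"
  unfolding monm_def by simp


lemma msp_monm:
  fixes A :: "real^'n^'n"
  assumes "minimally_semipositive A"
  shows "monm A"
  unfolding monm_def
proof (intro allI impI, rule ccontr)
  fix v j assume Av: "\<forall>i. 0 \<le> (A *v v) $ i" and neg: "\<not> 0 \<le> v $ j"
  obtain x where x0: "\<forall>j. x$j \<ge> 0" and Ax: "\<forall>i. (A *v x)$i > 0"
    using assms unfolding minimally_semipositive_def semipositive_def by blast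
  define K where "K = {k. v$k < 0}"
  have "j \<in> K" using neg K_def by simp
  hence Kne: "K \<noteq> {}" by blast
  have Kf: "finite K" by simp
  define f where "f = (\<lambda>k. x$k / (- v$k))"
  define t where "t = Min (f ` K)"
  have "t \<in> f ` K" unfolding t_def using Kne Kf by (intro Min_in) auto
  then obtain k0 where k0: "k0 \<in> K" "t = f k0" by blast
  have tle: "\<And>k. k \<in> K \<Longrightarrow> t \<le> f k" using Kf t_def by simp
  have t0: "t \<ge> 0" using k0 x0 unfolding f_def K_def by (simp add: divide_nonneg_neg)
  define y where "y = x + t *\<^sub>R v"
  have y0: "\<forall>k. y$k \<ge> 0"
  proof
    fix k show "y$k \<ge> 0"
    proof (cases "k \<in> K")
      case True
      hence vk: "v$k < 0" using K_def by simp
      have "t \<le> x$k / (- v$k)" using tle[OF True] f_def by simp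
      hence "t * (- v$k) \<le> (x$k / (- v$k)) * (- v$k)" using vk by (intro mult_right_mono) auto
      hence "t * (- v$k) \<le> x$k" using vk by simp
      thus ?thesis unfolding y_def by simp
    next
      case False
      hence "v$k \<ge> 0" using K_def by simp
      thus ?thesis unfolding y_def using x0 t0 by simp
    qed
  qed
  have yk0: "y$k0 = 0" using k0 unfolding y_def f_def K_def by simp
  have Ay: "\<forall>i. (A *v y)$i > 0"
  proof
    fix i
    have "A *v y = A *v x + t *\<^sub>R (A *v v)"
      unfolding y_def by (simp add: matrix_vector_right_distrib scalar_mult_eq_scaleR[symmetric] vector_scalar_commute)
    thus "(A *v y)$i > 0" using Ax Av t0 by (simp add: add_pos_nonneg)
  qed
  have "semipositive_on_cols A (UNIV - {k0})"
    unfolding semipositive_on_cols_def using y0 yk0 Ay by auto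
  moreover have "UNIV - {k0} \<subset> UNIV" by auto
  ultimately show False using assms unfolding minimally_semipositive_def by blast
qed

lemma monm_msp:
  fixes A :: "real^'n^'n"
  assumes "monm A"
  shows "minimally_semipositive A"
proof -
  obtain B where AB: "A ** B = mat 1" and BA: "B ** A = mat 1" using monm_inv[OF assms] by blast
  have B0: "\<forall>i j. B$i$j \<ge> 0" using monm_rinv_nonneg[OF assms AB] by blast
  define x where "x = B *v (1::real^'n)"
  have "\<forall>j. x$j \<ge> 0" unfolding x_def by (rule allI, rule nonneg_mv[OF B0], simp)
  moreover have "A *v x = 1" unfolding x_def by (simp add: matrix_vector_mul_assoc AB)
  ultimately have sp: "semipositive A" unfolding semipositive_def by (intro exI[of _ x]) simp
  have "\<not> semipositive_on_cols A J" if J: "J \<subset> UNIV" for J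
  proof
    assume "semipositive_on_cols A J"
    then obtain y where y0: "\<forall>j. y$j \<ge> 0" and yJ: "\<forall>j. j \<notin> J \<longrightarrow> y$j = 0"
       and Ay: "\<forall>i. (A *v y)$i > 0" unfolding semipositive_on_cols_def by blast
    obtain k where k: "k \<notin> J" using J by auto
    have "(B ** A)$k$k = 1" using BA by (simp add: mat_def)
    hence "(\<Sum>i\<in>UNIV. B$k$i * A$i$k) = 1" by (simp add: matrix_matrix_mult_def)
    moreover have "(\<Sum>i\<in>UNIV. B$k$i * A$i$k) = 0" if "\<forall>i. B$k$i * A$i$k = 0" using that by (intro sum.neutral) blast
    ultimately have "\<exists>i. B$k$i * A$i$k \<noteq> 0" by force
    then obtain i where "B$k$i * A$i$k \<noteq> 0" by blast
    hence "B$k$i \<noteq> 0" by auto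
    hence Bki: "B$k$i > 0" using B0[rule_format, of k i] by linarith
    have "y = B *v (A *v y)" by (simp add: matrix_vector_mul_assoc BA)
    hence "y$k = (B *v (A *v y))$k" by simp
    also have "\<dots> = (\<Sum>l\<in>UNIV. B$k$l * (A *v y)$l)" by (simp add: matrix_vector_mult_def)
    also have "\<dots> > 0"
    proof (rule sum_pos2[of UNIV i])
      show "0 < B$k$i * (A *v y)$i" using Bki Ay by simp
      show "\<And>l. l \<in> UNIV \<Longrightarrow> 0 \<le> B$k$l * (A *v y)$l" using B0 Ay by (simp add: less_imp_le)
    qed auto
    finally show False using yJ k by simp
  qed
  thus ?thesis using sp unfolding minimally_semipositive_def by blast
qed

lemma msp_iff: "minimally_semipositive (A::real^'n^'n) \<longleftrightarrow> monm A"
  using msp_monm monm_msp by blast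


lemma mm_add_r: "((A::real^'n^'n) + B) ** C = A ** C + B ** C"
  by (simp add: vec_eq_iff matrix_matrix_mult_def sum.distrib ring_distribs)
lemma mm_sub_l: "(A::real^'n^'n) ** (B - C) = A ** B - A ** C"
  by (simp add: vec_eq_iff matrix_matrix_mult_def sum_subtractf ring_distribs)
lemma mm_sub_r: "((A::real^'n^'n) - B) ** C = A ** C - B ** C"
  by (simp add: vec_eq_iff matrix_matrix_mult_def sum_subtractf ring_distribs)
lemma mm_scale_l: "(c *\<^sub>R (A::real^'n^'n)) ** B = c *\<^sub>R (A ** B)"
  by (simp add: vec_eq_iff matrix_matrix_mult_def sum_distrib_left mult.assoc)
lemma mm_scale_r: "(A::real^'n^'n) ** (c *\<^sub>R B) = c *\<^sub>R (A ** B)"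
  by (simp add: vec_eq_iff matrix_matrix_mult_def sum_distrib_left mult.left_commute)
lemma mm_neg: "(- (A::real^'n^'n)) ** (- B) = A ** B"
  by (simp add: vec_eq_iff matrix_matrix_mult_def)

definition Emat :: "'n \<Rightarrow> 'n \<Rightarrow> real^'n^'n" where
  "Emat i j = (\<chi> a b. if a = i \<and> b = j then 1 else 0)"

lemma Emat_sq: "Emat i j ** Emat i j = (if i = j then Emat i j else 0)"
  by (auto simp: vec_eq_iff matrix_matrix_mult_def Emat_def if_distrib[where f="\<lambda>x. x * _"] cong: if_cong)

lemma mult_Emat_entry: "(P ** Emat i j ** Q) $ k $ l = P$k$i * Q$j$l"
proof -
  have "(P ** Emat i j) = (\<chi> a b. if b = j then P$a$i else 0)"
    by (simp add: vec_eq_iff matrix_matrix_mult_def Emat_def if_distrib[where f="\<lambda>x. _ * x"] cong: if_cong)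
  thus ?thesis
    by (simp add: matrix_matrix_mult_def if_distrib[where f="\<lambda>x. x * _"] cong: if_cong)
qed

lemma Emat_inv:
  fixes c :: real and i j :: "'n::finite"
  assumes "c \<ge> 0"
  defines "d \<equiv> c / (1 + (if i = j then c else 0))"
  shows "(mat 1 + c *\<^sub>R Emat i j) ** (mat 1 - d *\<^sub>R Emat i j) = mat 1"
proof -
  have "(mat 1 + c *\<^sub>R Emat i j) ** (mat 1 - d *\<^sub>R Emat i j)
     = mat 1 + (c - d) *\<^sub>R Emat i j - (c * d) *\<^sub>R (Emat i j ** Emat i j)"
    by (simp add: matrix_add_ldistrib mm_add_r mm_sub_l mm_sub_r mm_scale_l mm_scale_r algebra_simps)
  also have "\<dots> = mat 1"
  proof (cases "i = j")
    case True
    have "c - d - c * d = 0" using assms True by (simp add: field_simps d_def)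
    hence "(c - d) *\<^sub>R Emat i j - (c * d) *\<^sub>R Emat i j = 0"
      by (metis scaleR_diff_left scaleR_zero_left)
    thus ?thesis using True by (simp add: Emat_sq algebra_simps)
  next
    case False
    thus ?thesis by (simp add: Emat_sq d_def)
  qed
  finally show ?thesis .
qed


lemma G_lemma:
  fixes X Y P Q :: "real^'n^'n"
  assumes a: "\<forall>A. monm A \<longrightarrow> monm (X ** A ** Y)"
  and XQ: "X ** Q = mat 1" and YP: "Y ** P = mat 1"
  shows "P$k$i * Q$j$l \<ge> 0"
proof (rule ccontr)
  assume neg: "\<not> P$k$i * Q$j$l \<ge> 0"
  define b where "b = P$k$i * Q$j$l"
  have b0: "b < 0" using neg b_def by simp
  define a0 where "a0 = (P**Q)$k$l"
  define c where "c = (\<bar>a0\<bar> + 1) / (- b)"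
  have c0: "c \<ge> 0" unfolding c_def using b0 by (intro divide_nonneg_pos) auto
  have cb: "c * b = - (\<bar>a0\<bar> + 1)" unfolding c_def using b0 by (simp add: field_simps)
  define d where "d = c / (1 + (if i = j then c else 0))"
  define N where "N = mat 1 + c *\<^sub>R Emat i j"
  define Ni where "Ni = mat 1 - d *\<^sub>R Emat i j"
  have NNi: "N ** Ni = mat 1" unfolding N_def Ni_def d_def using Emat_inv[OF c0] by blast
  hence NiN: "Ni ** N = mat 1" using matrix_left_right_inverse by blast
  have N0: "\<forall>a b. N$a$b \<ge> 0" unfolding N_def Emat_def using c0 by (simp add: mat_def)
  have "monm Ni" using monm_from_nonneg_inv[OF N0 NNi] .
  hence m: "monm (X ** Ni ** Y)" using a by blast
  have h1: "\<And>Z. Y ** (P ** Z) = Z" by (simp add: matrix_mul_assoc YP)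
  have h2: "\<And>Z. Ni ** (N ** Z) = Z" by (simp add: matrix_mul_assoc NiN)
  have "(X ** Ni ** Y) ** (P ** N ** Q) = X ** (Ni ** (Y ** (P ** (N ** Q))))"
    by (simp add: matrix_mul_assoc)
  also have "\<dots> = mat 1" by (simp add: h1 h2 XQ)
  finally have "(P ** N ** Q)$k$l \<ge> 0" using monm_rinv_nonneg[OF m] by blast
  moreover have "P ** N ** Q = P ** Q + c *\<^sub>R (P ** Emat i j ** Q)"
    unfolding N_def by (simp add: matrix_add_ldistrib mm_add_r mm_scale_l mm_scale_r)
  ultimately have "a0 + c * b \<ge> 0" unfolding a0_def b_def by (simp add: mult_Emat_entry)
  thus False using cb by simp
qed


lemma sum0_terms:
  fixes f :: "'n::finite \<Rightarrow> real"
  assumes "\<forall>j. f j \<ge> 0" "(\<Sum>j\<in>UNIV. f j) = 0"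
  shows "f j = 0"
  using assms sum_nonneg_eq_0_iff[of UNIV f] by simp

lemma sum1_term:
  fixes f :: "'n::finite \<Rightarrow> real"
  assumes "(\<Sum>j\<in>UNIV. f j) = 1"
  shows "\<exists>j. f j \<noteq> 0"
proof (rule ccontr)
  assume "\<not> (\<exists>j. f j \<noteq> 0)"
  hence "(\<Sum>j\<in>UNIV. f j) = 0" by simp
  thus False using assms by simp
qed

lemma nonneg_inv_monomial:
  fixes X Z :: "real^'n^'n"
  assumes X0: "\<forall>i j. X$i$j \<ge> 0" and Z0: "\<forall>i j. Z$i$j \<ge> 0"
    and XZ: "X ** Z = mat 1" and ZX: "Z ** X = mat 1"
  shows "monomial_matrix X"
proof -
  have XZ0: "X$i$j * Z$j$k = 0" if "i \<noteq> k" for i j k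
  proof -
    have "(X ** Z)$i$k = 0" using XZ that by (simp add: mat_def)
    hence "(\<Sum>j\<in>UNIV. X$i$j * Z$j$k) = 0" by (simp add: matrix_matrix_mult_def)
    moreover have "\<forall>j. X$i$j * Z$j$k \<ge> 0" using X0 Z0 by simp
    ultimately show ?thesis using sum0_terms[of "\<lambda>j. X$i$j * Z$j$k"] by blast
  qed
  have ZX0: "Z$j$i * X$i$j' = 0" if "j \<noteq> j'" for i j j'
  proof -
    have "(Z ** X)$j$j' = 0" using ZX that by (simp add: mat_def)
    hence "(\<Sum>i\<in>UNIV. Z$j$i * X$i$j') = 0" by (simp add: matrix_matrix_mult_def)
    moreover have "\<forall>i. Z$j$i * X$i$j' \<ge> 0" using X0 Z0 by simp
    ultimately show ?thesis using sum0_terms[of "\<lambda>i. Z$j$i * X$i$j'"] by blast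
  qed
  have XZd: "\<exists>j. X$i$j * Z$j$i \<noteq> 0" for i
  proof -
    have "(X ** Z)$i$i = 1" using XZ by (simp add: mat_def)
    hence "(\<Sum>j\<in>UNIV. X$i$j * Z$j$i) = 1" by (simp add: matrix_matrix_mult_def)
    thus ?thesis by (rule sum1_term)
  qed
  have ZXd: "\<exists>i. Z$j$i * X$i$j \<noteq> 0" for j
  proof -
    have "(Z ** X)$j$j = 1" using ZX by (simp add: mat_def)
    hence "(\<Sum>i\<in>UNIV. Z$j$i * X$i$j) = 1" by (simp add: matrix_matrix_mult_def)
    thus ?thesis by (rule sum1_term)
  qed
  have rows: "\<exists>!j. X$i$j \<noteq> 0" for i
  proof -
    obtain j where j: "X$i$j * Z$j$i \<noteq> 0" using XZd by blast
    have "j' = j" if "X$i$j' \<noteq> 0" for j'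
    proof (rule ccontr)
      assume jj: "j' \<noteq> j"
      obtain i' where i': "Z$j'$i' * X$i'$j' \<noteq> 0" using ZXd by blast
      have "i' = i"
      proof (rule ccontr)
        assume "i' \<noteq> i"
        hence "X$i$j' * Z$j'$i' = 0" by (intro XZ0) simp
        thus False using i' that by simp
      qed
      have "Z$j'$i * X$i$j = 0" using jj by (intro ZX0) simp
      moreover have "Z$j'$i \<noteq> 0" using i' \<open>i' = i\<close> by simp
      ultimately show False using j by simp
    qed
    moreover have "X$i$j \<noteq> 0" using j by simp
    ultimately show ?thesis by blast
  qed
  have cols: "\<exists>!i. X$i$j \<noteq> 0" for j
  proof -
    obtain i where i: "Z$j$i * X$i$j \<noteq> 0" using ZXd by blast
    have "i' = i" if "X$i'$j \<noteq> 0" for i'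
    proof (rule ccontr)
      assume ii: "i' \<noteq> i"
      have "Z$j$k = 0" for k
      proof (cases "k = i")
        case True
        hence "k \<noteq> i'" using ii by simp
        hence "X$i'$j * Z$j$k = 0" by (intro XZ0) simp
        thus ?thesis using that by simp
      next
        case False
        hence "X$i$j * Z$j$k = 0" by (intro XZ0) simp
        thus ?thesis using i by simp
      qed
      thus False using i by simp
    qed
    moreover have "X$i$j \<noteq> 0" using i by simp
    ultimately show ?thesis by blast
  qed
  show ?thesis unfolding monomial_matrix_def
    by (intro conjI allI; (rule X0[rule_format] | rule rows | rule cols))
qed

lemma sign_lemma:
  fixes X Y :: "real^'n^'n"
  assumes h: "\<forall>k i j l. Y$k$i * X$j$l \<ge> 0"
    and xn: "X$j$l \<noteq> 0" and yn: "Y$k$i \<noteq> 0"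
  shows "((\<forall>a b. X$a$b \<ge> 0) \<and> (\<forall>a b. Y$a$b \<ge> 0)) \<or>
         ((\<forall>a b. X$a$b \<le> 0) \<and> (\<forall>a b. Y$a$b \<le> 0))"
proof (cases "X$j$l > 0")
  case True
  have Y0: "Y$a$b \<ge> 0" for a b
    using h[rule_format, of a b j l] True by (simp add: zero_le_mult_iff)
  hence yp: "Y$k$i > 0" using yn by (simp add: less_le)
  have "X$a$b \<ge> 0" for a b
    using h[rule_format, of k i a b] yp by (simp add: zero_le_mult_iff)
  thus ?thesis using Y0 by blast
next
  case False
  hence xl: "X$j$l < 0" using xn by simp
  have Y0: "Y$a$b \<le> 0" for a b
    using h[rule_format, of a b j l] xl by (simp add: zero_le_mult_iff)
  hence yp: "Y$k$i < 0" using yn by (simp add: less_le)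
  have "X$a$b \<le> 0" for a b
    using h[rule_format, of k i a b] yp by (simp add: zero_le_mult_iff)
  thus ?thesis using Y0 by blast
qed

lemma diag_false:
  fixes X Q :: "real^'n^'n"
  assumes "\<forall>a b. X$a$b * Q$b$a \<le> 0" "X ** Q = mat 1"
  shows False
proof -
  obtain a :: 'n where True by simp
  have "(X ** Q)$a$a = 1" using assms(2) by (simp add: mat_def)
  moreover have "(X ** Q)$a$a \<le> 0" unfolding matrix_matrix_mult_def
    using assms(1) by (simp add: sum_nonpos)
  ultimately show False by simp
qed

lemma nonzero_entry:
  fixes X Q :: "real^'n^'n"
  assumes "X ** Q = mat 1"
  shows "\<exists>a b. X$a$b \<noteq> 0"
proof (rule ccontr)
  assume "\<not> ?thesis"
  hence "X = 0" by (simp add: vec_eq_iff)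
  hence "(X ** Q)$undefined$undefined = 0" by (simp add: matrix_matrix_mult_def)
  thus False using assms by (simp add: mat_def)
qed

lemma monomial_monm:
  fixes X :: "real^'n^'n"
  assumes "monomial_matrix X"
  shows "monm X"
  unfolding monm_def
proof (intro allI impI)
  fix v j assume h: "\<forall>i. 0 \<le> (X *v v) $ i"
  obtain i where i: "X$i$j \<noteq> 0" using assms unfolding monomial_matrix_def by blast
  have u: "X$i$k = 0" if "k \<noteq> j" for k
    using assms i that unfolding monomial_matrix_def by blast
  have "(X *v v)$i = (\<Sum>k\<in>UNIV. X$i$k * v$k)" by (simp add: matrix_vector_mult_def)
  also have "\<dots> = (\<Sum>k\<in>UNIV. if k = j then X$i$j * v$j else 0)"
    by (rule sum.cong) (auto simp: u)
  also have "\<dots> = X$i$j * v$j" by simp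
  finally have "X$i$j * v$j \<ge> 0" using h by metis
  moreover have "X$i$j > 0" using assms i unfolding monomial_matrix_def by (simp add: less_le)
  ultimately show "v$j \<ge> 0" by (simp add: zero_le_mult_iff)
qed

lemma suff:
  fixes X Y :: "real^'n^'n"
  assumes mx: "monomial_matrix X" and my: "monomial_matrix Y"
  shows "(\<lambda>A. X ** A ** Y) ` {A :: real^'n^'n. minimally_semipositive A}
            = {A. minimally_semipositive A}"
proof -
  have mX: "monm X" and mY: "monm Y" using monomial_monm mx my by auto
  obtain Q where XQ: "X ** Q = mat 1" and QX: "Q ** X = mat 1" using monm_inv[OF mX] by blast
  obtain P where YP: "Y ** P = mat 1" and PY: "P ** Y = mat 1" using monm_inv[OF mY] by blast
  have mQ: "monm Q" using monm_from_nonneg_inv[OF _ XQ] mx unfolding monomial_matrix_def by blast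
  have mP: "monm P" using monm_from_nonneg_inv[OF _ YP] my unfolding monomial_matrix_def by blast
  show ?thesis
  proof (rule set_eqI, rule iffI)
    fix B :: "real^'n^'n" assume "B \<in> (\<lambda>A. X ** A ** Y) ` {A. minimally_semipositive A}"
    then obtain A where "monm A" "B = X ** A ** Y" using msp_iff by blast
    hence "monm B" using monm_mult[OF monm_mult[OF mX] mY] by simp
    thus "B \<in> {A. minimally_semipositive A}" using monm_msp by blast
  next
    fix B :: "real^'n^'n" assume "B \<in> {A. minimally_semipositive A}"
    hence mB: "monm B" using msp_monm by blast
    have "X ** (Q ** B ** P) ** Y = (X ** Q) ** B ** (P ** Y)" by (simp add: matrix_mul_assoc)
    hence e: "X ** (Q ** B ** P) ** Y = B" using XQ PY by simp
    have "monm (Q ** B ** P)" using monm_mult mQ mB mP by blast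
    hence "Q ** B ** P \<in> {A. minimally_semipositive A}" using monm_msp by blast
    thus "B \<in> (\<lambda>A. X ** A ** Y) ` {A. minimally_semipositive A}" using e by (metis image_eqI)
  qed
qed

lemma negneg: "(- X) ** (A::real^'n^'n) ** (- Y) = X ** A ** Y"
  by (simp add: vec_eq_iff matrix_matrix_mult_def sum_negf)


theorem mainTheorem7:
  fixes X Y :: "real^'n^'n"
  shows "((\<lambda>A. X ** A ** Y) ` {A :: real^'n^'n. minimally_semipositive A}
            = {A. minimally_semipositive A})
         \<longleftrightarrow> ((monomial_matrix X \<and> monomial_matrix Y) \<or>
              (monomial_matrix (- X) \<and> monomial_matrix (- Y)))"
proof
  assume eq: "(\<lambda>A. X ** A ** Y) ` {A :: real^'n^'n. minimally_semipositive A}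
            = {A. minimally_semipositive A}"
  have a: "\<forall>A. monm A \<longrightarrow> monm (X ** A ** Y)"
  proof (intro allI impI)
    fix A :: "real^'n^'n" assume "monm A"
    hence "minimally_semipositive A" using monm_msp by blast
    hence "X ** A ** Y \<in> {A. minimally_semipositive A}" using eq by blast
    thus "monm (X ** A ** Y)" using msp_monm by blast
  qed
  have b: "\<forall>B. monm B \<longrightarrow> (\<exists>A. monm A \<and> B = X ** A ** Y)"
  proof (intro allI impI)
    fix B :: "real^'n^'n" assume "monm B"
    hence "B \<in> (\<lambda>A. X ** A ** Y) ` {A :: real^'n^'n. minimally_semipositive A}"
      using eq monm_msp by blast
    then obtain A where "minimally_semipositive A" "B = X ** A ** Y" by blast
    thus "\<exists>A. monm A \<and> B = X ** A ** Y" using msp_monm by blast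
  qed
  have "monm (X ** mat 1 ** Y)" using a monm_one by blast
  hence "monm (X ** Y)" by simp
  then obtain R where R1: "(X ** Y) ** R = mat 1" and R2: "R ** (X ** Y) = mat 1"
    using monm_inv by blast
  define Q where "Q = Y ** R"
  define P where "P = R ** X"
  have XQ: "X ** Q = mat 1" using R1 unfolding Q_def by (simp add: matrix_mul_assoc)
  hence QX: "Q ** X = mat 1" using matrix_left_right_inverse by blast
  have PY: "P ** Y = mat 1" using R2 unfolding P_def by (simp add: matrix_mul_assoc)
  hence YP: "Y ** P = mat 1" using matrix_left_right_inverse by blast
  have a': "\<forall>B. monm B \<longrightarrow> monm (Q ** B ** P)"
  proof (intro allI impI)
    fix B :: "real^'n^'n" assume "monm B"
    then obtain A where A: "monm A" "B = X ** A ** Y" using b by blast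
    have "Q ** B ** P = (Q ** X) ** A ** (Y ** P)" using A(2) by (simp add: matrix_mul_assoc)
    thus "monm (Q ** B ** P)" using A(1) QX YP by simp
  qed
  have G1: "\<forall>k i j l. P$k$i * Q$j$l \<ge> 0" using G_lemma[OF a XQ YP] by blast
  have G2: "\<forall>k i j l. Y$k$i * X$j$l \<ge> 0" using G_lemma[OF a' QX PY] by blast
  obtain j l where xn: "X$j$l \<noteq> 0" using nonzero_entry[OF XQ] by blast
  obtain k i where yn: "Y$k$i \<noteq> 0" using nonzero_entry[OF YP] by blast
  obtain j' l' where qn: "Q$j'$l' \<noteq> 0" using nonzero_entry[OF QX] by blast
  obtain k' i' where pn: "P$k'$i' \<noteq> 0" using nonzero_entry[OF PY] by blast
  have S1: "((\<forall>a b. X$a$b \<ge> 0) \<and> (\<forall>a b. Y$a$b \<ge> 0)) \<or>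
         ((\<forall>a b. X$a$b \<le> 0) \<and> (\<forall>a b. Y$a$b \<le> 0))"
    using sign_lemma[OF G2 xn yn] .
  have S2: "((\<forall>a b. Q$a$b \<ge> 0) \<and> (\<forall>a b. P$a$b \<ge> 0)) \<or>
         ((\<forall>a b. Q$a$b \<le> 0) \<and> (\<forall>a b. P$a$b \<le> 0))"
    using sign_lemma[OF G1 qn pn] .
  show "(monomial_matrix X \<and> monomial_matrix Y) \<or>
              (monomial_matrix (- X) \<and> monomial_matrix (- Y))"
  proof (cases "\<forall>a b. X$a$b \<ge> 0")
    case True
    hence Y0: "\<forall>a b. Y$a$b \<ge> 0" using S1 xn by (metis order.antisym)
    have "\<not> (\<forall>a b. Q$a$b \<le> 0)"
    proof
      assume "\<forall>a b. Q$a$b \<le> 0"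
      hence "\<forall>a b. X$a$b * Q$b$a \<le> 0" using True by (simp add: mult_nonneg_nonpos)
      thus False using diag_false XQ by blast
    qed
    hence Q0: "\<forall>a b. Q$a$b \<ge> 0" and P0: "\<forall>a b. P$a$b \<ge> 0" using S2 by blast+
    have "monomial_matrix X" using nonneg_inv_monomial[OF True Q0 XQ QX] .
    moreover have "monomial_matrix Y" using nonneg_inv_monomial[OF Y0 P0 YP PY] .
    ultimately show ?thesis by blast
  next
    case False
    hence X0: "\<forall>a b. X$a$b \<le> 0" and Y0: "\<forall>a b. Y$a$b \<le> 0" using S1 by blast+
    have "\<not> (\<forall>a b. Q$a$b \<ge> 0)"
    proof
      assume "\<forall>a b. Q$a$b \<ge> 0"
      hence "\<forall>a b. X$a$b * Q$b$a \<le> 0" using X0 by (simp add: mult_nonpos_nonneg)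
      thus False using diag_false XQ by blast
    qed
    hence Q0: "\<forall>a b. Q$a$b \<le> 0" and P0: "\<forall>a b. P$a$b \<le> 0" using S2 by blast+
    have "monomial_matrix (- X)"
    proof (rule nonneg_inv_monomial[of _ "- Q"])
      show "(- X) ** (- Q) = mat 1" by (simp only: mm_neg XQ)
      show "(- Q) ** (- X) = mat 1" by (simp only: mm_neg QX)
    qed (use X0 Q0 in auto)
    moreover have "monomial_matrix (- Y)"
    proof (rule nonneg_inv_monomial[of _ "- P"])
      show "(- Y) ** (- P) = mat 1" by (simp only: mm_neg YP)
      show "(- P) ** (- Y) = mat 1" by (simp only: mm_neg PY)
    qed (use Y0 P0 in auto)
    ultimately show ?thesis by blast
  qed
next
  assume "(monomial_matrix X \<and> monomial_matrix Y) \<or>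
              (monomial_matrix (- X) \<and> monomial_matrix (- Y))"
  thus "(\<lambda>A. X ** A ** Y) ` {A :: real^'n^'n. minimally_semipositive A}
            = {A. minimally_semipositive A}"
  proof
    assume "monomial_matrix X \<and> monomial_matrix Y"
    thus ?thesis using suff by blast
  next
    assume "monomial_matrix (- X) \<and> monomial_matrix (- Y)"
    hence "(\<lambda>A. (- X) ** A ** (- Y)) ` {A :: real^'n^'n. minimally_semipositive A}
            = {A. minimally_semipositive A}" using suff by blast
    thus ?thesis by (simp add: negneg)
  qed
qed

end
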